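(* Every generalized Rickart $*$-ring has a unity (multiplicative identity) element.
   Context: A $*$-ring is an associative ring $R$ (not assumed to have an identity) equipped with an involution $x\mapsto x^*$, i.e. an additive map with $(xy)^*=y^*x^*$ and $x^{**}=x$. A projection is an element $e$ with $e=e^*=e^2$. For $a\in R$, $r(a)=\{b\in R: ab=0\}$. $R$ is a generalized Rickart $*$-ring if for every $x\in R$ there exist a positive integer $n$ and a projection $g\in R$ with $r(x^n)=gR$. *)

theory Defs
  imports Main
begin

text \<open>A *-ring: an associative (not necessarily unital) ring with an involution.
  We use the type class ring (which has no multiplicative identity) and an
  explicit function star for the involution.\<close>

definition is_involution :: "('a::ring \<Rightarrow> 'a) \<Rightarrow> bool" where
  "is_involution star \<longleftrightarrow>
     (\<forall>x y. star (x + y) = star x + star y) \<and>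
     (\<forall>x y. star (x * y) = star y * star x) \<and>
     (\<forall>x. star (star x) = x)"

definition is_projection :: "('a::ring \<Rightarrow> 'a) \<Rightarrow> 'a \<Rightarrow> bool" where
  "is_projection star e \<longleftrightarrow> e = star e \<and> e = e * e"

text \<open>Positive powers in a ring without identity: rpow x n = x^(n+1).\<close>
fun rpow :: "'a::ring \<Rightarrow> nat \<Rightarrow> 'a" where
  "rpow x 0 = x"
| "rpow x (Suc n) = x * rpow x n"

definition right_ann :: "'a::ring \<Rightarrow> 'a set" where
  "right_ann a = {b. a * b = 0}"

definition principal_right_ideal :: "'a::ring \<Rightarrow> 'a set" where
  "principal_right_ideal g = {g * r | r. True}"

definition generalized_rickart :: "('a::ring \<Rightarrow> 'a) \<Rightarrow> bool" where
  "generalized_rickart star \<longleftrightarrow>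
     is_involution star \<and>
     (\<forall>x. \<exists>n::nat. n > 0 \<and> (\<exists>g. is_projection star g \<and>
          right_ann (rpow x (n - 1)) = principal_right_ideal g))"

end

theory Submission
  imports Defs
begin

lemma rpow_zero: "rpow (0::'a::ring) k = 0"
  by (cases k) auto

theorem mainTheorem1:
  fixes star :: "'a::ring \<Rightarrow> 'a"
  assumes "generalized_rickart star"
  shows "\<exists>u::'a. \<forall>x. u * x = x \<and> x * u = x"
proof -
  have inv: "is_involution star" using assms unfolding generalized_rickart_def by blast
  obtain n g where pg: "is_projection star g"
    and eq: "right_ann (rpow (0::'a) (n - 1)) = principal_right_ideal g"
    using assms unfolding generalized_rickart_def by blast
  have gg: "g = star g" "g = g * g" using pg unfolding is_projection_def by auto
  have left: "g * x = x" for x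
  proof -
    have "x \<in> right_ann (rpow (0::'a) (n - 1))" by (simp add: right_ann_def rpow_zero)
    then obtain r where "x = g * r" using eq unfolding principal_right_ideal_def by auto
    then show ?thesis using gg(2) by (metis mult.assoc)
  qed
  have right: "x * g = x" for x
  proof -
    have "star (g * star x) = star (star x)" using left by simp
    then show ?thesis using inv gg(1) unfolding is_involution_def by metis
  qed
  show ?thesis using left right by blast
qed

end
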